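(* Let $n\ge1$ and $f:(\mathbb{R}_{>0})^n\to\mathbb{R}$, $f(z_2,\ldots,z_{n+1})=\frac{(1+z_2+\cdots+z_{n+1})^{n+1}}{z_2\cdots z_{n+1}}$. For $t\in\mathbb{R}$, the preimage $f^{-1}(t)$ is empty if $t<(n+1)^{n+1}$, a single point if $t=(n+1)^{n+1}$, and diffeomorphic to $S^{n-1}$ if $t>(n+1)^{n+1}$. *)

theory Defs
  imports "HOL-Analysis.Analysis"
begin

fun iter_dir :: "'a::real_normed_vector list \<Rightarrow> ('a \<Rightarrow> 'b::real_normed_vector) \<Rightarrow> 'a \<Rightarrow> 'b" where
  "iter_dir [] f = f"
| "iter_dir (v # vs) f = (\<lambda>x. frechet_derivative (iter_dir vs f) (at x) v)"

definition smooth_on_open :: "'a::euclidean_space set \<Rightarrow> ('a \<Rightarrow> 'b::real_normed_vector) \<Rightarrow> bool" where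
  "smooth_on_open U f \<longleftrightarrow> open U \<and>
     (\<forall>vs. set vs \<subseteq> Basis \<longrightarrow> iter_dir vs f differentiable_on U)"

text \<open>Smooth map on an arbitrary subset S (Milnor): locally the restriction of a smooth map
  on an open set.\<close>
definition smooth_map_on :: "'a::euclidean_space set \<Rightarrow> ('a \<Rightarrow> 'b::real_normed_vector) \<Rightarrow> bool" where
  "smooth_map_on S h \<longleftrightarrow>
     (\<forall>x\<in>S. \<exists>U F. x \<in> U \<and> smooth_on_open U F \<and> (\<forall>y\<in>S \<inter> U. F y = h y))"

definition diffeomorphic :: "'a::euclidean_space set \<Rightarrow> 'b::euclidean_space set \<Rightarrow> bool" where
  "diffeomorphic S T \<longleftrightarrow> (\<exists>h g. (\<forall>x\<in>S. h x \<in> T) \<and> (\<forall>y\<in>T. g y \<in> S) \<and>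
      (\<forall>x\<in>S. g (h x) = x) \<and> (\<forall>y\<in>T. h (g y) = y) \<and>
      smooth_map_on S h \<and> smooth_map_on T g)"

end

theory Submission
  imports Defs
begin


inductive_set SM :: "'a::real_normed_vector set \<Rightarrow> ('a \<Rightarrow> real) set \<Rightarrow> ('a \<Rightarrow> real) set"
  for U :: "'a set" and A :: "('a \<Rightarrow> real) set" where
  atom: "a \<in> A \<Longrightarrow> a \<in> SM U A"
| const: "(\<lambda>x. c) \<in> SM U A"
| lin: "bounded_linear l \<Longrightarrow> l \<in> SM U A"
| add: "f \<in> SM U A \<Longrightarrow> g \<in> SM U A \<Longrightarrow> (\<lambda>x. f x + g x) \<in> SM U A"
| mult: "f \<in> SM U A \<Longrightarrow> g \<in> SM U A \<Longrightarrow> (\<lambda>x. f x * g x) \<in> SM U A"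
| exp: "f \<in> SM U A \<Longrightarrow> (\<lambda>x. exp (f x)) \<in> SM U A"
| ln: "f \<in> SM U A \<Longrightarrow> (\<forall>x\<in>U. 0 < f x) \<Longrightarrow> (\<lambda>x. ln (f x)) \<in> SM U A"
| inv: "f \<in> SM U A \<Longrightarrow> (\<forall>x\<in>U. f x \<noteq> 0) \<Longrightarrow> (\<lambda>x. inverse (f x)) \<in> SM U A"
| sqrt: "f \<in> SM U A \<Longrightarrow> (\<forall>x\<in>U. 0 < f x) \<Longrightarrow> (\<lambda>x. sqrt (f x)) \<in> SM U A"

lemma SM_sum: "finite I \<Longrightarrow> (\<And>i. i \<in> I \<Longrightarrow> F i \<in> SM U A) \<Longrightarrow> (\<lambda>x. \<Sum>i\<in>I. F i x) \<in> SM U A"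
proof (induction I rule: finite_induct)
  case empty
  then show ?case using SM.const[of 0] by simp
next
  case (insert i I)
  then show ?case using SM.add[of "F i" U A "\<lambda>x. \<Sum>i\<in>I. F i x"] by simp
qed

lemma frech_eq: "(f has_derivative f') (at x) \<Longrightarrow> frechet_derivative f (at x) v = f' v"
  using frechet_derivative_at by metis

lemma exI_SM: "h \<in> S \<Longrightarrow> \<forall>x\<in>U. h x = F x \<Longrightarrow> \<exists>g\<in>S. \<forall>x\<in>U. g x = F x" by blast

lemma SM_deriv:
  assumes U: "open U"
    and atoms: "\<And>a. a \<in> A \<Longrightarrow> (\<forall>x\<in>U. a differentiable (at x)) \<and>
          (\<forall>v. \<exists>g\<in>SM U A. \<forall>x\<in>U. g x = frechet_derivative a (at x) v)"
    and f: "f \<in> SM U A"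
  shows "(\<forall>x\<in>U. f differentiable (at x)) \<and>
          (\<forall>v. \<exists>g\<in>SM U A. \<forall>x\<in>U. g x = frechet_derivative f (at x) v)"
  using f
proof (induction rule: SM.induct)
  case (atom a)
  then show ?case using atoms by blast
next
  case (const c)
  have "\<And>x. ((\<lambda>x. c) has_derivative (\<lambda>h. 0)) (at x)" by (rule derivative_eq_intros) auto
  then show ?case using SM.const[of 0 U A] by (auto simp: frech_eq differentiable_def)
next
  case (lin l)
  have d: "\<And>x. (l has_derivative l) (at x)" using lin bounded_linear_imp_has_derivative by blast
  then show ?case
  proof (intro conjI allI ballI)
    fix v show "\<exists>g\<in>SM U A. \<forall>x\<in>U. g x = frechet_derivative l (at x) v"
      by (rule bexI[OF _ SM.const[of "l v"]]) (simp add: frech_eq[OF d])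
  qed (auto simp: differentiable_def)
next
  case (add f g)
  show ?case
  proof
    show "\<forall>x\<in>U. (\<lambda>x. f x + g x) differentiable at x" using add by auto
    show "\<forall>v. \<exists>h\<in>SM U A. \<forall>x\<in>U. h x = frechet_derivative (\<lambda>x. f x + g x) (at x) v"
    proof
      fix v
      obtain g1 where g1: "g1 \<in> SM U A" "\<forall>x\<in>U. g1 x = frechet_derivative f (at x) v" using add by blast
      obtain g2 where g2: "g2 \<in> SM U A" "\<forall>x\<in>U. g2 x = frechet_derivative g (at x) v" using add by blast
      have "\<forall>x\<in>U. (\<lambda>x. g1 x + g2 x) x = frechet_derivative (\<lambda>x. f x + g x) (at x) v"
      proof
        fix x assume x: "x \<in> U"
        have "((\<lambda>x. f x + g x) has_derivative (\<lambda>h. frechet_derivative f (at x) h + frechet_derivative g (at x) h)) (at x)"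
          using add x by (intro has_derivative_add frechet_derivative_works[THEN iffD1]) auto
        then show "(\<lambda>x. g1 x + g2 x) x = frechet_derivative (\<lambda>x. f x + g x) (at x) v"
          using g1 g2 x by (simp add: frech_eq)
      qed
      note E = this
      show "\<exists>h\<in>SM U A. \<forall>x\<in>U. h x = frechet_derivative (\<lambda>x. f x + g x) (at x) v"
        by (rule exI_SM[OF SM.add[OF g1(1) g2(1)]]) (use E in simp)
    qed
  qed
next
  case (mult f g)
  show ?case
  proof
    show "\<forall>x\<in>U. (\<lambda>x. f x * g x) differentiable at x" using mult by auto
    show "\<forall>v. \<exists>h\<in>SM U A. \<forall>x\<in>U. h x = frechet_derivative (\<lambda>x. f x * g x) (at x) v"
    proof
      fix v
      obtain g1 where g1: "g1 \<in> SM U A" "\<forall>x\<in>U. g1 x = frechet_derivative f (at x) v" using mult by blast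
      obtain g2 where g2: "g2 \<in> SM U A" "\<forall>x\<in>U. g2 x = frechet_derivative g (at x) v" using mult by blast
      have "\<forall>x\<in>U. (\<lambda>x. f x * g2 x + g1 x * g x) x = frechet_derivative (\<lambda>x. f x * g x) (at x) v"
      proof
        fix x assume x: "x \<in> U"
        have "((\<lambda>x. f x * g x) has_derivative (\<lambda>h. f x * frechet_derivative g (at x) h + frechet_derivative f (at x) h * g x)) (at x)"
          using mult x by (intro has_derivative_mult frechet_derivative_works[THEN iffD1]) auto
        then show "(\<lambda>x. f x * g2 x + g1 x * g x) x = frechet_derivative (\<lambda>x. f x * g x) (at x) v"
          using g1 g2 x by (simp add: frech_eq)
      qed
      note E = this
      show "\<exists>h\<in>SM U A. \<forall>x\<in>U. h x = frechet_derivative (\<lambda>x. f x * g x) (at x) v"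
        by (rule exI_SM[OF SM.add[OF SM.mult[OF mult.hyps(1) g2(1)] SM.mult[OF g1(1) mult.hyps(2)]]]) (use E in simp)
    qed
  qed
next
  case (exp f)
  show ?case
  proof
    have d: "\<And>x. x \<in> U \<Longrightarrow> ((\<lambda>x. exp (f x)) has_derivative (\<lambda>h. exp (f x) * frechet_derivative f (at x) h)) (at x)"
    proof -
      fix x assume x: "x \<in> U"
      show "((\<lambda>x. exp (f x)) has_derivative (\<lambda>h. exp (f x) * frechet_derivative f (at x) h)) (at x)"
        using exp x by (auto intro!: derivative_eq_intros frechet_derivative_works[THEN iffD1])
    qed
    then show "\<forall>x\<in>U. (\<lambda>x. exp (f x)) differentiable at x" by (auto simp: differentiable_def)
    show "\<forall>v. \<exists>h\<in>SM U A. \<forall>x\<in>U. h x = frechet_derivative (\<lambda>x. exp (f x)) (at x) v"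
    proof
      fix v
      obtain g1 where g1: "g1 \<in> SM U A" "\<forall>x\<in>U. g1 x = frechet_derivative f (at x) v" using exp by blast
      have "\<forall>x\<in>U. (\<lambda>x. exp (f x) * g1 x) x = frechet_derivative (\<lambda>x. exp (f x)) (at x) v"
        using g1 by (auto simp: frech_eq[OF d])
      note E = this
      show "\<exists>h\<in>SM U A. \<forall>x\<in>U. h x = frechet_derivative (\<lambda>x. exp (f x)) (at x) v"
        by (rule exI_SM[OF SM.mult[OF SM.exp[OF exp.hyps(1)] g1(1)]]) (use E in simp)
    qed
  qed
next
  case (ln f)
  show ?case
  proof
    have d: "\<And>x. x \<in> U \<Longrightarrow> ((\<lambda>x. ln (f x)) has_derivative (\<lambda>h. frechet_derivative f (at x) h * inverse (f x))) (at x)"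
    proof -
      fix x assume x: "x \<in> U"
      show "((\<lambda>x. ln (f x)) has_derivative (\<lambda>h. frechet_derivative f (at x) h * inverse (f x))) (at x)"
        using ln x by (auto intro!: derivative_eq_intros frechet_derivative_works[THEN iffD1] simp: field_simps)
    qed
    then show "\<forall>x\<in>U. (\<lambda>x. ln (f x)) differentiable at x" by (auto simp: differentiable_def)
    show "\<forall>v. \<exists>h\<in>SM U A. \<forall>x\<in>U. h x = frechet_derivative (\<lambda>x. ln (f x)) (at x) v"
    proof
      fix v
      obtain g1 where g1: "g1 \<in> SM U A" "\<forall>x\<in>U. g1 x = frechet_derivative f (at x) v" using ln by blast
      have "\<forall>x\<in>U. (\<lambda>x. g1 x * inverse (f x)) x = frechet_derivative (\<lambda>x. ln (f x)) (at x) v"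
        using g1 by (auto simp: frech_eq[OF d])
      note E = this
        have M: "(\<lambda>x. g1 x * inverse (f x)) \<in> SM U A"
        using ln by (intro SM.mult g1 SM.inv) auto
        show "\<exists>h\<in>SM U A. \<forall>x\<in>U. h x = frechet_derivative (\<lambda>x. ln (f x)) (at x) v"
        by (rule exI_SM[OF M]) (use E in simp)
    qed
  qed
next
  case (inv f)
  show ?case
  proof
    have d: "\<And>x. x \<in> U \<Longrightarrow> ((\<lambda>x. inverse (f x)) has_derivative (\<lambda>h. - (inverse (f x) * frechet_derivative f (at x) h * inverse (f x)))) (at x)"
    proof -
      fix x assume x: "x \<in> U"
      show "((\<lambda>x. inverse (f x)) has_derivative (\<lambda>h. - (inverse (f x) * frechet_derivative f (at x) h * inverse (f x)))) (at x)"
        using inv x by (auto intro!: derivative_eq_intros frechet_derivative_works[THEN iffD1])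
    qed
    then show "\<forall>x\<in>U. (\<lambda>x. inverse (f x)) differentiable at x" by (auto simp: differentiable_def)
    show "\<forall>v. \<exists>h\<in>SM U A. \<forall>x\<in>U. h x = frechet_derivative (\<lambda>x. inverse (f x)) (at x) v"
    proof
      fix v
      obtain g1 where g1: "g1 \<in> SM U A" "\<forall>x\<in>U. g1 x = frechet_derivative f (at x) v" using inv by blast
      have "\<forall>x\<in>U. (\<lambda>x. (-1) * (inverse (f x) * g1 x * inverse (f x))) x = frechet_derivative (\<lambda>x. inverse (f x)) (at x) v"
        using g1 by (auto simp: frech_eq[OF d])
      note E = this
        have M: "(\<lambda>x. (-1) * (inverse (f x) * g1 x * inverse (f x))) \<in> SM U A"
        using inv by (intro SM.mult g1 SM.inv SM.const) auto
        show "\<exists>h\<in>SM U A. \<forall>x\<in>U. h x = frechet_derivative (\<lambda>x. inverse (f x)) (at x) v"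
        by (rule exI_SM[OF M]) (use E in simp)
    qed
  qed
next
  case (sqrt f)
  show ?case
  proof
    have d: "\<And>x. x \<in> U \<Longrightarrow> ((\<lambda>x. sqrt (f x)) has_derivative (\<lambda>h. frechet_derivative f (at x) h * (inverse (sqrt (f x)) / 2))) (at x)"
    proof -
      fix x assume x: "x \<in> U"
      show "((\<lambda>x. sqrt (f x)) has_derivative (\<lambda>h. frechet_derivative f (at x) h * (inverse (sqrt (f x)) / 2))) (at x)"
        using sqrt x by (auto intro!: derivative_eq_intros frechet_derivative_works[THEN iffD1])
    qed
    then show "\<forall>x\<in>U. (\<lambda>x. sqrt (f x)) differentiable at x" by (auto simp: differentiable_def)
    show "\<forall>v. \<exists>h\<in>SM U A. \<forall>x\<in>U. h x = frechet_derivative (\<lambda>x. sqrt (f x)) (at x) v"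
    proof
      fix v
      obtain g1 where g1: "g1 \<in> SM U A" "\<forall>x\<in>U. g1 x = frechet_derivative f (at x) v" using sqrt by blast
      have "\<forall>x\<in>U. (\<lambda>x. g1 x * (inverse (sqrt (f x)) * (1/2))) x = frechet_derivative (\<lambda>x. sqrt (f x)) (at x) v"
        using g1 by (auto simp: frech_eq[OF d])
      note E = this
        have M: "(\<lambda>x. g1 x * (inverse (sqrt (f x)) * (1/2))) \<in> SM U A"
        using sqrt by (intro SM.mult g1 SM.inv SM.const SM.sqrt) auto
        show "\<exists>h\<in>SM U A. \<forall>x\<in>U. h x = frechet_derivative (\<lambda>x. sqrt (f x)) (at x) v"
        by (rule exI_SM[OF M]) (use E in simp)
    qed
  qed
qed



lemma dclosed_iter:
  fixes K :: "('a::euclidean_space \<Rightarrow> 'b::real_normed_vector) set"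
  assumes U: "open U"
    and K: "\<And>f. f \<in> K \<Longrightarrow> (\<forall>x\<in>U. f differentiable (at x)) \<and>
              (\<forall>v. \<exists>g\<in>K. \<forall>x\<in>U. g x = frechet_derivative f (at x) v)"
    and f: "f \<in> K"
  shows "\<exists>g\<in>K. \<forall>x\<in>U. iter_dir vs f x = g x"
proof (induction vs)
  case Nil
  then show ?case using f by auto
next
  case (Cons v vs)
  then obtain g where g: "g \<in> K" "\<forall>x\<in>U. iter_dir vs f x = g x" by blast
  obtain g2 where g2: "g2 \<in> K" "\<forall>x\<in>U. g2 x = frechet_derivative g (at x) v" using K[OF g(1)] by blast
  have "\<forall>x\<in>U. iter_dir (v # vs) f x = g2 x"
  proof
    fix x assume x: "x \<in> U"
    have "(g has_derivative frechet_derivative g (at x)) (at x)"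
      using K[OF g(1)] x frechet_derivative_works by blast
    then have "(iter_dir vs f has_derivative frechet_derivative g (at x)) (at x)"
      by (rule has_derivative_transform_within_open[OF _ U x]) (use g in auto)
    then have "frechet_derivative (iter_dir vs f) (at x) = frechet_derivative g (at x)"
      using frechet_derivative_at by metis
    then show "iter_dir (v # vs) f x = g2 x" using g2 x by simp
  qed
  then show ?case using g2 by blast
qed

lemma dclosed_smooth:
  fixes K :: "('a::euclidean_space \<Rightarrow> 'b::real_normed_vector) set"
  assumes U: "open U"
    and K: "\<And>f. f \<in> K \<Longrightarrow> (\<forall>x\<in>U. f differentiable (at x)) \<and>
              (\<forall>v. \<exists>g\<in>K. \<forall>x\<in>U. g x = frechet_derivative f (at x) v)"
    and f: "f \<in> K"
  shows "smooth_on_open U f"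
  unfolding smooth_on_open_def
proof (intro conjI U allI impI)
  fix vs :: "'a list"
  obtain g where g: "g \<in> K" "\<forall>x\<in>U. iter_dir vs f x = g x" using dclosed_iter[OF U K f] by blast
  show "iter_dir vs f differentiable_on U"
    unfolding differentiable_on_def
  proof
    fix x assume x: "x \<in> U"
    obtain D where "(g has_derivative D) (at x)" using K[OF g(1)] x by (auto simp: differentiable_def)
    then have "(iter_dir vs f has_derivative D) (at x)"
      by (rule has_derivative_transform_within_open[OF _ U x]) (use g in auto)
    then show "iter_dir vs f differentiable at x within U"
      by (auto simp: differentiable_def intro: has_derivative_at_withinI)
  qed
qed


lemma SM_vec_smooth:
  fixes F :: "'a::euclidean_space \<Rightarrow> real^'n"
  assumes U: "open U"
    and atoms: "\<And>a. a \<in> A \<Longrightarrow> (\<forall>x\<in>U. a differentiable (at x)) \<and>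
          (\<forall>v. \<exists>g\<in>SM U A. \<forall>x\<in>U. g x = frechet_derivative a (at x) v)"
    and F: "\<And>i. (\<lambda>x. F x $ i) \<in> SM U A"
  shows "smooth_on_open U F"
proof (rule dclosed_smooth[OF U _, of "{F. \<forall>i. (\<lambda>x. F x $ i) \<in> SM U A}"])
  show "F \<in> {F. \<forall>i. (\<lambda>x. F x $ i) \<in> SM U A}" using F by auto
next
  fix G :: "'a \<Rightarrow> real^'n"
  assume "G \<in> {F. \<forall>i. (\<lambda>x. F x $ i) \<in> SM U A}"
  then have G: "\<And>i. (\<lambda>x. G x $ i) \<in> SM U A" by auto
  note D = SM_deriv[OF U atoms G]
  have hd: "(G has_derivative (\<lambda>h. \<chi> i. frechet_derivative (\<lambda>x. G x $ i) (at x) h)) (at x)"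
    if x: "x \<in> U" for x
  proof -
    have "((\<lambda>x. G x $ i) has_derivative frechet_derivative (\<lambda>x. G x $ i) (at x)) (at x)" for i
      using D x frechet_derivative_works by blast
    then show ?thesis
      unfolding has_derivative_componentwise_within[of G]
      by (auto simp: inner_axis Basis_vec_def)
  qed
  show "(\<forall>x\<in>U. G differentiable (at x)) \<and>
          (\<forall>v. \<exists>g\<in>{F. \<forall>i. (\<lambda>x. F x $ i) \<in> SM U A}. \<forall>x\<in>U. g x = frechet_derivative G (at x) v)"
  proof (intro conjI ballI allI)
    fix x assume "x \<in> U" then show "G differentiable at x" using hd by (auto simp: differentiable_def)
  next
    fix v
    have "\<forall>i. \<exists>g\<in>SM U A. \<forall>x\<in>U. g x = frechet_derivative (\<lambda>x. G x $ i) (at x) v" using D by blast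
    then obtain gs where gs: "\<And>i. gs i \<in> SM U A" "\<And>i x. x \<in> U \<Longrightarrow> gs i x = frechet_derivative (\<lambda>x. G x $ i) (at x) v"
      by metis
    have "\<forall>x\<in>U. (\<lambda>x. \<chi> i. gs i x) x = frechet_derivative G (at x) v"
    proof
      fix x assume x: "x \<in> U"
      show "(\<lambda>x. \<chi> i. gs i x) x = frechet_derivative G (at x) v"
        using frechet_derivative_at[OF hd[OF x], symmetric] gs(2)[OF x] by (simp add: vec_eq_iff)
    qed
    moreover have "(\<lambda>x. \<chi> i. gs i x) \<in> {F. \<forall>i. (\<lambda>x. F x $ i) \<in> SM U A}" using gs(1) by simp
    ultimately show "\<exists>g\<in>{F. \<forall>i. (\<lambda>x. F x $ i) \<in> SM U A}. \<forall>x\<in>U. g x = frechet_derivative G (at x) v"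
      by (intro bexI[of _ "\<lambda>x. \<chi> i. gs i x"]) auto
  qed
qed



definition Psi :: "real^'n \<Rightarrow> real \<Rightarrow> real" where
  "Psi u r = (real CARD('n) + 1) * ln (1 + (\<Sum>i\<in>UNIV. exp (r * u$i))) - r * (\<Sum>i\<in>UNIV. u$i)"

definition Psir :: "real^'n \<Rightarrow> real \<Rightarrow> real" where
  "Psir u r = (real CARD('n) + 1) * (\<Sum>i\<in>UNIV. exp (r * u$i) * u$i) / (1 + (\<Sum>i\<in>UNIV. exp (r * u$i)))
     - (\<Sum>i\<in>UNIV. u$i)"

lemma D_pos: "0 < 1 + (\<Sum>i\<in>UNIV. exp (r * (u::real^'n)$i))"
  by (simp add: add_pos_nonneg sum_nonneg)

lemma Psi_deriv_r: "((\<lambda>r. Psi u r) has_real_derivative Psir u r) (at r)"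
  unfolding Psi_def Psir_def
  using D_pos[of r u]
  by (auto intro!: derivative_eq_intros simp: field_simps sum_distrib_left sum_divide_distrib
      add_divide_distrib sum.distrib)

lemma sum_pair_identity:
  fixes u e :: "'n::finite \<Rightarrow> real"
  shows "(\<Sum>i\<in>UNIV. \<Sum>j\<in>UNIV. (u i - u j) * (e i - e j))
     = 2 * (real CARD('n) * (\<Sum>i\<in>UNIV. e i * u i) - (\<Sum>i\<in>UNIV. u i) * (\<Sum>i\<in>UNIV. e i))"
proof -
  have p: "(u i - u j) * (e i - e j) = (e i * u i + e j * u j) - (u i * e j + u j * e i)" for i j
    by (simp add: algebra_simps)
  have A: "(\<Sum>i\<in>UNIV. \<Sum>j\<in>(UNIV::'n set). e i * u i + e j * u j) = 2 * (real CARD('n) * (\<Sum>i\<in>UNIV. e i * u i))"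
    by (simp add: sum.distrib sum_distrib_left algebra_simps)
  have B1: "(\<Sum>i\<in>UNIV. \<Sum>j\<in>(UNIV::'n set). u i * e j) = (\<Sum>i\<in>UNIV. u i) * (\<Sum>i\<in>UNIV. e i)"
    by (simp add: sum_product)
  have B2: "(\<Sum>i\<in>UNIV. \<Sum>j\<in>(UNIV::'n set). u j * e i) = (\<Sum>i\<in>UNIV. u i) * (\<Sum>i\<in>UNIV. e i)"
    by (subst sum.swap) (simp add: sum_product)
  have "(\<Sum>i\<in>UNIV. \<Sum>j\<in>UNIV. (u i - u j) * (e i - e j))
      = (\<Sum>i\<in>UNIV. \<Sum>j\<in>(UNIV::'n set). e i * u i + e j * u j) - ((\<Sum>i\<in>UNIV. \<Sum>j\<in>(UNIV::'n set). u i * e j) + (\<Sum>i\<in>UNIV. \<Sum>j\<in>(UNIV::'n set). u j * e i))"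
    unfolding p by (simp add: sum_subtractf sum.distrib)
  then show ?thesis using A B1 B2 by simp
qed

lemma Psir_pos:
  fixes u :: "real^'n"
  assumes u: "u \<noteq> 0" and r: "0 < r"
  shows "0 < Psir u r"
proof -
  define e where "e i = exp (r * u$i)" for i
  define D where "D = 1 + (\<Sum>i\<in>UNIV. e i)"
  have D: "0 < D" unfolding D_def e_def by (rule D_pos)
  have pair: "0 \<le> (u$i - u$j) * (e i - e j)" for i j
  proof (cases "u$i \<le> u$j")
    case True
    then have "e i \<le> e j" unfolding e_def using r by (simp add: mult_left_mono)
    then show ?thesis using True by (intro mult_nonpos_nonpos) auto
  next
    case False
    then have "e j \<le> e i" unfolding e_def using r by (simp add: mult_left_mono)
    then show ?thesis using False by (intro mult_nonneg_nonneg) auto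
  qed
  have single: "0 \<le> u$i * (e i - 1)" for i
  proof (cases "0 \<le> u$i")
    case True
    then have "1 \<le> e i" unfolding e_def using r by simp
    then show ?thesis using True by simp
  next
    case False
    then have "r * u$i < 0" using r by (simp add: mult_pos_neg)
    then have "e i \<le> 1" unfolding e_def by simp
    then show ?thesis using False by (intro mult_nonpos_nonpos) auto
  qed
  obtain k where k: "u$k \<noteq> 0" using u by (auto simp: vec_eq_iff)
  have sk: "0 < u$k * (e k - 1)"
  proof (cases "0 < u$k")
    case True
    then have "1 < e k" unfolding e_def using r by simp
    then show ?thesis using True by simp
  next
    case False
    then have "u$k < 0" using k by simp
    then have "e k < 1" unfolding e_def using r by (simp add: mult_pos_neg)
    then show ?thesis using \<open>u$k < 0\<close> by (intro mult_neg_neg) auto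
  qed
  have S1: "0 \<le> (\<Sum>i\<in>UNIV. \<Sum>j\<in>UNIV. (u$i - u$j) * (e i - e j))"
    using pair by (intro sum_nonneg) auto
  have "u$k * (e k - 1) \<le> (\<Sum>i\<in>UNIV. u$i * (e i - 1))"
    using single by (intro member_le_sum) auto
  with sk have S2: "0 < (\<Sum>i\<in>UNIV. u$i * (e i - 1))" by linarith
  have S2': "(\<Sum>i\<in>UNIV. u$i * (e i - 1)) = (\<Sum>i\<in>UNIV. e i * u$i) - (\<Sum>i\<in>UNIV. u$i)"
    by (simp add: algebra_simps sum_subtractf)
  have id: "(\<Sum>i\<in>UNIV. \<Sum>j\<in>UNIV. (u$i - u$j) * (e i - e j))
     = 2 * (real CARD('n) * (\<Sum>i\<in>UNIV. e i * u$i) - (\<Sum>i\<in>UNIV. u$i) * (\<Sum>i\<in>UNIV. e i))"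
    using sum_pair_identity[of "\<lambda>i. u$i" e] by simp
  have num: "0 < (real CARD('n) + 1) * (\<Sum>i\<in>UNIV. e i * u$i) - D * (\<Sum>i\<in>UNIV. u$i)"
    using S1 S2 S2' id unfolding D_def by (simp add: algebra_simps)
  have "Psir u r = ((real CARD('n) + 1) * (\<Sum>i\<in>UNIV. e i * u$i) - D * (\<Sum>i\<in>UNIV. u$i)) / D"
    unfolding Psir_def e_def D_def using D_pos[of r u] by (simp add: field_simps)
  then show ?thesis using num D by simp
qed

lemma Psi_cont: "continuous_on S (\<lambda>r. Psi u r)"
  by (intro continuous_at_imp_continuous_on ballI DERIV_isCont[OF Psi_deriv_r])

lemma Psi_mono:
  fixes u :: "real^'n"
  assumes u: "u \<noteq> 0" and a: "0 \<le> a" and ab: "a < b"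
  shows "Psi u a < Psi u b"
proof (rule DERIV_pos_imp_increasing_open[OF ab])
  fix x assume "a < x" "x < b"
  then show "\<exists>y. ((\<lambda>r. Psi u r) has_real_derivative y) (at x) \<and> 0 < y"
    using Psi_deriv_r[of u x] Psir_pos[OF u, of x] a \<open>a < x\<close> by auto
qed (rule Psi_cont)

lemma Psi_mono_le:
  fixes u :: "real^'n"
  assumes u: "u \<noteq> 0" and a: "0 \<le> a" and ab: "a \<le> b"
  shows "Psi u a \<le> Psi u b"
proof (cases "a = b")
  case False
  then show ?thesis using Psi_mono[OF u a, of b] ab by simp
qed simp

lemma Psi_0: "Psi (u::real^'n) 0 = (real CARD('n) + 1) * ln (1 + real CARD('n))"
  unfolding Psi_def by simp

lemma Psi_scale: "Psi (r *\<^sub>R u) 1 = Psi u r"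
  unfolding Psi_def by (simp add: sum_distrib_left mult.assoc)

lemma Psi_lower:
  fixes u :: "real^'n"
  assumes r: "0 \<le> r"
  shows "r * \<bar>u$k\<bar> \<le> Psi u r"
proof -
  define x where "x i = r * u$i" for i
  define L where "L = ln (1 + (\<Sum>i\<in>UNIV. exp (x i)))"
  have Dp: "0 < 1 + (\<Sum>i\<in>UNIV. exp (x i))" by (simp add: add_pos_nonneg sum_nonneg)
  have L0: "0 \<le> L" unfolding L_def by (simp add: sum_nonneg)
  have Lx: "x j \<le> L" for j
  proof -
    have "exp (x j) \<le> (\<Sum>i\<in>UNIV. exp (x i))" by (rule member_le_sum) auto
    then have "exp (x j) \<le> 1 + (\<Sum>i\<in>UNIV. exp (x i))" by simp
    then have "ln (exp (x j)) \<le> L" unfolding L_def using Dp by (subst ln_le_cancel_iff) auto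
    then show ?thesis by simp
  qed
  have s1: "(\<Sum>j\<in>UNIV. (L - x j)) = real CARD('n) * L - (\<Sum>j\<in>UNIV. x j)"
    by (simp add: sum_subtractf)
  have s2: "(\<Sum>j\<in>UNIV. x j) = r * (\<Sum>i\<in>UNIV. u$i)" unfolding x_def by (simp add: sum_distrib_left)
  have "Psi u r = (real CARD('n) + 1) * L - r * (\<Sum>i\<in>UNIV. u$i)"
    unfolding Psi_def L_def x_def by simp
  then have "Psi u r = L + (\<Sum>j\<in>UNIV. (L - x j))"
    unfolding s1 s2 by (simp add: algebra_simps)
  moreover have "L - x k \<le> (\<Sum>j\<in>UNIV. (L - x j))"
    using Lx by (intro member_le_sum) auto
  ultimately have "L + (L - x k) \<le> Psi u r" by simp
  moreover have "\<bar>x k\<bar> \<le> L + (L - x k)" using L0 Lx[of k] by linarith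
  ultimately show ?thesis unfolding x_def by (simp add: abs_mult r)
qed

lemma Psi_exists:
  fixes u :: "real^'n"
  assumes u: "u \<noteq> 0" and s: "Psi u 0 < s"
  shows "\<exists>!r. 0 < r \<and> Psi u r = s"
proof -
  obtain k where k: "u$k \<noteq> 0" using u by (auto simp: vec_eq_iff)
  define b where "b = \<bar>s\<bar> / \<bar>u$k\<bar> + 1"
  have b: "0 < b" unfolding b_def using k by (simp add: add_nonneg_pos)
  have "b * \<bar>u$k\<bar> = \<bar>s\<bar> + \<bar>u$k\<bar>" unfolding b_def using k by (simp add: field_simps)
  then have "s < b * \<bar>u$k\<bar>" using k by linarith
  then have sb: "s \<le> Psi u b" using Psi_lower[of b u k] b by linarith
  obtain r where r: "0 \<le> r" "r \<le> b" "Psi u r = s"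
    using IVT'[of "\<lambda>r. Psi u r" 0 s b] s sb b Psi_cont by force
  have "r \<noteq> 0" using r s by auto
  then have r0: "0 < r" using r by simp
  show ?thesis
  proof (rule ex1I[of _ r])
    show "0 < r \<and> Psi u r = s" using r0 r by simp
    fix r' assume r': "0 < r' \<and> Psi u r' = s"
    show "r' = r"
    proof (rule ccontr)
      assume "r' \<noteq> r"
      then consider "r' < r" | "r < r'" by linarith
      then show False
        using Psi_mono[OF u, of r' r] Psi_mono[OF u, of r r'] r r0 r' by (cases; force)
    qed
  qed
qed



definition Psia :: "real^'n \<Rightarrow> real \<Rightarrow> real^'n \<Rightarrow> real" where
  "Psia u r a = r * ((real CARD('n) + 1) * (\<Sum>i\<in>UNIV. exp (r * u$i) * a$i) / (1 + (\<Sum>i\<in>UNIV. exp (r * u$i)))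
     - (\<Sum>i\<in>UNIV. a$i))"

lemma fst_nth_deriv: "((\<lambda>p::(real^'n) \<times> real. fst p $ i) has_derivative (\<lambda>h. fst h $ i)) (at x)"
  by (rule bounded_linear_imp_has_derivative)
     (rule bounded_linear_compose[OF bounded_linear_vec_nth bounded_linear_fst])

lemma Psi_joint_deriv:
  fixes u :: "real^'n"
  shows "((\<lambda>p. Psi (fst p) (snd p)) has_derivative (\<lambda>h. Psia u r (fst h) + Psir u r * snd h)) (at (u, r))"
proof -
  define D where "D = 1 + (\<Sum>i\<in>UNIV. exp (r * u$i))"
  have D: "0 < D" unfolding D_def by (rule D_pos)
  have S: "((\<lambda>p. \<Sum>i\<in>UNIV. exp (snd p * fst p $ i)) has_derivative
      (\<lambda>h. \<Sum>i\<in>UNIV. exp (r * u$i) * (snd h * u$i + r * fst h $ i))) (at (u, r))"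
    apply (rule has_derivative_sum)
    apply (rule has_derivative_eq_rhs)
     apply (rule derivative_eq_intros fst_nth_deriv refl)+
    apply (auto simp: algebra_simps)
    done
  have T: "((\<lambda>p. snd p * (\<Sum>i\<in>UNIV. fst p $ i)) has_derivative
      (\<lambda>h. snd h * (\<Sum>i\<in>UNIV. u $ i) + r * (\<Sum>i\<in>UNIV. fst h $ i))) (at (u, r))"
    apply (rule has_derivative_eq_rhs)
     apply (rule derivative_eq_intros has_derivative_sum fst_nth_deriv refl)+
    apply (auto simp: algebra_simps)
    done
  have S1: "((\<lambda>p. 1 + (\<Sum>i\<in>UNIV. exp (snd p * fst p $ i))) has_derivative
      (\<lambda>h. \<Sum>i\<in>UNIV. exp (r * u$i) * (snd h * u$i + r * fst h $ i))) (at (u, r))"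
    using has_derivative_add[OF has_derivative_const S] by simp
  have L: "((\<lambda>p. ln (1 + (\<Sum>i\<in>UNIV. exp (snd p * fst p $ i)))) has_derivative
      (\<lambda>h. (\<Sum>i\<in>UNIV. exp (r * u$i) * (snd h * u$i + r * fst h $ i)) / D)) (at (u, r))"
    apply (rule has_derivative_eq_rhs)
     apply (rule DERIV_compose_FDERIV[OF DERIV_ln S1])
    using D apply (simp add: D_def)
    apply (simp add: D_def divide_inverse mult.commute)
    done
  have key: "(\<Sum>i\<in>UNIV. exp (r * u$i) * (b * u$i + r * a $ i)) =
       b * (\<Sum>i\<in>UNIV. exp (r * u$i) * u$i) + r * (\<Sum>i\<in>UNIV. exp (r * u$i) * a$i)" for a :: "real^'n" and b
    by (simp add: algebra_simps sum.distrib sum_distrib_left)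
  have E: "Psi (fst p) (snd p) = (real CARD('n) + 1) * ln (1 + (\<Sum>i\<in>UNIV. exp (snd p * fst p $ i)))
       - snd p * (\<Sum>i\<in>UNIV. fst p $ i)" for p :: "(real^'n) \<times> real"
    unfolding Psi_def by simp
  show ?thesis
    unfolding E
    apply (rule has_derivative_eq_rhs)
     apply (rule has_derivative_diff has_derivative_mult_right L T)+
    apply (rule ext)
    unfolding Psia_def Psir_def key D_def[symmetric]
    using D by (simp add: field_simps)
qed


definition Rs :: "real \<Rightarrow> real^'n \<Rightarrow> real" where
  "Rs s u = (THE r. 0 < r \<and> Psi u r = s)"

lemma Rs:
  fixes u :: "real^'n"
  assumes "u \<noteq> 0" "Psi u 0 < s"
  shows "0 < Rs s u \<and> Psi u (Rs s u) = s"
  unfolding Rs_def using theI'[OF Psi_exists[OF assms]] .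

lemma Rs_unique:
  fixes u :: "real^'n"
  assumes u: "u \<noteq> 0" and r: "0 < r" and s: "Psi u r = s"
  shows "Rs s u = r"
proof -
  have "Psi u 0 < s" using Psi_mono[OF u, of 0 r] r s by simp
  then show ?thesis unfolding Rs_def using the1_equality[OF Psi_exists[OF u] ] r s by blast
qed

lemma Psi_isCont: "isCont (\<lambda>p. Psi (fst p) (snd p)) (x::(real^'n) \<times> real)"
  using has_derivative_continuous[OF Psi_joint_deriv[of "fst x" "snd x"]] by simp

lemma Psi_tendsto_fix:
  fixes u0 :: "real^'n"
  shows "((\<lambda>q. Psi (fst q) a) \<longlongrightarrow> Psi u0 a) (at (u0, s0))"
proof -
  have "((\<lambda>q. (fst q, a)) \<longlongrightarrow> (u0, a)) (at (u0, s0))"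
  proof (intro tendsto_Pair tendsto_const)
    have "((\<lambda>q. fst q) \<longlongrightarrow> fst (u0, s0)) (at (u0, s0))" by (rule tendsto_fst[OF tendsto_ident_at])
    then show "((\<lambda>q. fst q) \<longlongrightarrow> u0) (at (u0, s0))" by simp
  qed
  from isCont_tendsto_compose[OF Psi_isCont this] show ?thesis by simp
qed

definition T0 :: "((real^'n) \<times> real) set" where
  "T0 = {q. fst q \<noteq> 0 \<and> (real CARD('n) + 1) * ln (1 + real CARD('n)) < snd q}"

lemma open_T0: "open (T0 :: ((real^'n) \<times> real) set)"
proof -
  have "(T0 :: ((real^'n) \<times> real) set) = {q. fst q \<noteq> 0} \<inter> {q::(real^'n) \<times> real. (real CARD('n) + 1) * ln (1 + real CARD('n)) < snd q}"
    unfolding T0_def by auto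
  moreover have "open {q::(real^'n) \<times> real. fst q \<noteq> 0}"
    by (rule open_Collect_neq) (intro continuous_intros)+
  moreover have "open {q::(real^'n) \<times> real. (real CARD('n) + 1) * ln (1 + real CARD('n)) < snd q}"
    by (rule open_Collect_less) (intro continuous_intros)+
  ultimately show ?thesis by (metis open_Int)
qed

lemma T0_iff: "q \<in> T0 \<longleftrightarrow> fst q \<noteq> 0 \<and> Psi (fst q) 0 < snd q"
  unfolding T0_def Psi_0 by simp

lemma Rs_tendsto:
  fixes u0 :: "real^'n"
  assumes y: "(u0, s0) \<in> T0"
  shows "((\<lambda>q. Rs (snd q) (fst q)) \<longlongrightarrow> Rs s0 u0) (at (u0, s0))"
proof -
  define \<rho> where "\<rho> = Rs s0 u0"
  have u0: "u0 \<noteq> 0" and s0: "Psi u0 0 < s0" using y T0_iff[of "(u0, s0)"] by auto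
  have \<rho>: "0 < \<rho>" "Psi u0 \<rho> = s0" using Rs[OF u0 s0] unfolding \<rho>_def by auto
  have ev: "eventually (\<lambda>q. q \<in> T0) (at (u0, s0))"
    unfolding eventually_at_topological using open_T0 y by blast
  have snd_t: "((\<lambda>q. snd q) \<longlongrightarrow> s0) (at (u0, s0))"
    using tendsto_snd[OF tendsto_ident_at, of "(u0, s0)" UNIV] by simp
  show ?thesis
    unfolding \<rho>_def[symmetric]
  proof (rule order_tendstoI)
    fix a assume a: "a < \<rho>"
    show "eventually (\<lambda>q. a < Rs (snd q) (fst q)) (at (u0, s0))"
    proof (cases "a \<le> 0")
      case True
      show ?thesis using ev
      proof (rule eventually_mono)
        fix q :: "(real^'n) \<times> real" assume "q \<in> T0"
        then have "0 < Rs (snd q) (fst q)" using Rs[of "fst q" "snd q"] T0_iff[of q] by blast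
        then show "a < Rs (snd q) (fst q)" using True by linarith
      qed
    next
      case False
      have "Psi u0 a < s0" using Psi_mono[OF u0, of a \<rho>] a False \<rho> by simp
      then have "eventually (\<lambda>q. 0 < snd q - Psi (fst q) a) (at (u0, s0))"
        by (intro order_tendstoD(1)[OF tendsto_diff[OF snd_t Psi_tendsto_fix]]) simp
      with ev show ?thesis
      proof (rule eventually_elim2)
        fix q :: "(real^'n) \<times> real" assume q: "q \<in> T0" "0 < snd q - Psi (fst q) a"
        have R: "0 < Rs (snd q) (fst q)" "Psi (fst q) (Rs (snd q) (fst q)) = snd q"
          using Rs[of "fst q" "snd q"] q T0_iff[of q] by auto
        show "a < Rs (snd q) (fst q)"
        proof (rule ccontr)
          assume "\<not> a < Rs (snd q) (fst q)"
          then have "Psi (fst q) (Rs (snd q) (fst q)) \<le> Psi (fst q) a"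
            using Psi_mono_le[of "fst q" "Rs (snd q) (fst q)" a] q R T0_iff[of q] by simp
          then show False using R q by simp
        qed
      qed
    qed
  next
    fix b assume b: "\<rho> < b"
    have "s0 < Psi u0 b" using Psi_mono[OF u0, of \<rho> b] b \<rho> by simp
    then have "eventually (\<lambda>q. snd q - Psi (fst q) b < 0) (at (u0, s0))"
      by (intro order_tendstoD(2)[OF tendsto_diff[OF snd_t Psi_tendsto_fix]]) simp
    with ev show "eventually (\<lambda>q. Rs (snd q) (fst q) < b) (at (u0, s0))"
    proof (rule eventually_elim2)
      fix q :: "(real^'n) \<times> real" assume q: "q \<in> T0" "snd q - Psi (fst q) b < 0"
      have R: "0 < Rs (snd q) (fst q)" "Psi (fst q) (Rs (snd q) (fst q)) = snd q"
        using Rs[of "fst q" "snd q"] q T0_iff[of q] by auto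
      show "Rs (snd q) (fst q) < b"
      proof (rule ccontr)
        assume "\<not> Rs (snd q) (fst q) < b"
        then have "Psi (fst q) b \<le> Psi (fst q) (Rs (snd q) (fst q))"
          using Psi_mono_le[of "fst q" b "Rs (snd q) (fst q)"] q R T0_iff[of q] b \<rho> by simp
        then show False using R q by simp
      qed
    qed
  qed
qed

lemma Psia_add: "Psia u r (a + b) = Psia u r a + Psia u r b"
  unfolding Psia_def by (simp add: algebra_simps sum.distrib add_divide_distrib)

lemma Psia_scale: "Psia u r (c *\<^sub>R a) = c * Psia u r a"
  unfolding Psia_def by (simp add: algebra_simps sum_distrib_left[symmetric] times_divide_eq_right)



lemma G_deriv:
  fixes u0 :: "real^'n"
  assumes y: "(u0, s0) \<in> T0"
  defines "\<rho> \<equiv> Rs s0 u0"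
  shows "((\<lambda>q. (fst q, Rs (snd q) (fst q))) has_derivative
          (\<lambda>h. (fst h, (snd h - Psia u0 \<rho> (fst h)) / Psir u0 \<rho>))) (at (u0, s0))"
proof -
  have u0: "u0 \<noteq> 0" and s0: "Psi u0 0 < s0" using y T0_iff[of "(u0, s0)"] by auto
  have \<rho>: "0 < \<rho>" "Psi u0 \<rho> = s0" using Rs[OF u0 s0] unfolding \<rho>_def by auto
  have pos: "0 < Psir u0 \<rho>" using Psir_pos[OF u0 \<rho>(1)] .
  show ?thesis
  proof (rule has_derivative_inverse_basic[where f = "\<lambda>p. (fst p, Psi (fst p) (snd p))"
        and f' = "\<lambda>h. (fst h, Psia u0 \<rho> (fst h) + Psir u0 \<rho> * snd h)" and T = T0])
    show "((\<lambda>p. (fst p, Psi (fst p) (snd p))) has_derivative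
        (\<lambda>h. (fst h, Psia u0 \<rho> (fst h) + Psir u0 \<rho> * snd h))) (at (fst (u0, s0), Rs (snd (u0, s0)) (fst (u0, s0))))"
      using has_derivative_Pair[OF has_derivative_fst[OF has_derivative_ident] Psi_joint_deriv[of u0 \<rho>]]
      unfolding \<rho>_def by simp
    have lin: "linear (\<lambda>h::(real^'n) \<times> real. (fst h, (snd h - Psia u0 \<rho> (fst h)) / Psir u0 \<rho>))"
      by (rule linearI) (auto simp: Psia_add Psia_scale algebra_simps diff_divide_distrib add_divide_distrib)
    then show "bounded_linear (\<lambda>h::(real^'n) \<times> real. (fst h, (snd h - Psia u0 \<rho> (fst h)) / Psir u0 \<rho>))"
      using linear_conv_bounded_linear by blast
    show "(\<lambda>h. (fst h, (snd h - Psia u0 \<rho> (fst h)) / Psir u0 \<rho>)) \<circ>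
        (\<lambda>h. (fst h, Psia u0 \<rho> (fst h) + Psir u0 \<rho> * snd h)) = id"
      using pos by (auto simp: fun_eq_iff)
    have "((\<lambda>q. (fst q, Rs (snd q) (fst q))) \<longlongrightarrow> (fst (u0, s0), Rs (snd (u0, s0)) (fst (u0, s0)))) (at (u0, s0))"
    proof (intro tendsto_Pair)
      show "((\<lambda>q. fst q) \<longlongrightarrow> fst (u0, s0)) (at (u0, s0))" by (rule tendsto_fst[OF tendsto_ident_at])
      show "((\<lambda>q. Rs (snd q) (fst q)) \<longlongrightarrow> Rs (snd (u0, s0)) (fst (u0, s0))) (at (u0, s0))"
        using Rs_tendsto[OF y] by simp
    qed
    then show "continuous (at (u0, s0)) (\<lambda>q. (fst q, Rs (snd q) (fst q)))"
      unfolding continuous_at by simp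
    show "open T0" by (rule open_T0)
    show "(u0, s0) \<in> T0" by (rule y)
    fix z :: "(real^'n) \<times> real" assume "z \<in> T0"
    then have "Psi (fst z) (Rs (snd z) (fst z)) = snd z" using Rs[of "fst z" "snd z"] T0_iff[of z] by auto
    then show "(fst (fst z, Rs (snd z) (fst z)), Psi (fst (fst z, Rs (snd z) (fst z))) (snd (fst z, Rs (snd z) (fst z)))) = z"
      by simp
  qed
qed

lemma R_deriv:
  fixes u :: "real^'n"
  assumes y: "(u, s) \<in> T0"
  shows "((\<lambda>u. Rs s u) has_derivative (\<lambda>a. - Psia u (Rs s u) a / Psir u (Rs s u))) (at u)"
proof -
  have i: "((\<lambda>u. (u, s)) has_derivative (\<lambda>a. (a, 0))) (at u)"
    by (rule derivative_eq_intros refl)+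
  have "((\<lambda>u. snd (fst (u, s), Rs (snd (u, s)) (fst (u, s)))) has_derivative
        (\<lambda>a. snd (fst (a, 0::real), (snd (a, 0::real) - Psia u (Rs s u) (fst (a, 0::real))) / Psir u (Rs s u)))) (at u)"
    by (rule has_derivative_snd[OF has_derivative_compose[OF i G_deriv[OF y]]])
  then show ?thesis by simp
qed



lemma open_nonzero: "open {u::real^'n. u \<noteq> 0}"
  by (rule open_Collect_neq) (intro continuous_intros)+

lemma coord_SM: "(\<lambda>u::real^'n. u $ i) \<in> SM U A"
  by (rule SM.lin) (rule bounded_linear_vec_nth)

lemma R_atom:
  fixes s :: real
  assumes s: "(real CARD('n) + 1) * ln (1 + real CARD('n)) < s"
  shows "(\<forall>x\<in>{u::real^'n. u \<noteq> 0}. Rs s differentiable at x) \<and>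
    (\<forall>v. \<exists>g\<in>SM {u::real^'n. u \<noteq> 0} {Rs s}. \<forall>x\<in>{u::real^'n. u \<noteq> 0}. g x = frechet_derivative (Rs s) (at x) v)"
proof -
  let ?U = "{u::real^'n. u \<noteq> 0}"
  have y: "(u, s) \<in> T0" if "u \<in> ?U" for u :: "real^'n"
    using that s by (simp add: T0_def)
  have d: "((\<lambda>u. Rs s u) has_derivative (\<lambda>a. - Psia u (Rs s u) a / Psir u (Rs s u))) (at u)"
    if "u \<in> ?U" for u using R_deriv[OF y[OF that]] .
  have Rpos: "0 < Rs s u" if "u \<in> ?U" for u :: "real^'n"
    using Rs[of u s] that s Psi_0[of u] by auto
  have Psirpos: "0 < Psir u (Rs s u)" if "u \<in> ?U" for u :: "real^'n"
    using Psir_pos[of u "Rs s u"] Rpos[OF that] that by auto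
  have cR: "Rs s \<in> SM ?U {Rs s}" by (rule SM.atom) simp
  show ?thesis
  proof (intro conjI ballI allI)
    fix x :: "real^'n" assume "x \<in> ?U"
    then show "Rs s differentiable at x" using d[of x] by (auto simp: differentiable_def)
  next
    fix v :: "real^'n"
    define Da where "Da u = 1 + (\<Sum>i\<in>UNIV. exp (Rs s u * u$i))" for u :: "real^'n"
    define PA where "PA u = Rs s u * ((real CARD('n) + 1) * (\<Sum>i\<in>UNIV. exp (Rs s u * u$i) * v$i) * inverse (Da u)
        + (-1) * (\<Sum>i\<in>UNIV. v$i))" for u
    define PR where "PR u = (real CARD('n) + 1) * (\<Sum>i\<in>UNIV. exp (Rs s u * u$i) * u$i) * inverse (Da u)
        + (-1) * (\<Sum>i\<in>UNIV. u$i)" for u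
    have Dpos: "0 < Da u" for u unfolding Da_def by (rule D_pos)
    have PR_eq: "PR u = Psir u (Rs s u)" for u
      unfolding PR_def Psir_def Da_def by (simp add: divide_inverse)
    have PA_eq: "PA u = Psia u (Rs s u) v" for u
      unfolding PA_def Psia_def Da_def by (simp add: divide_inverse)
    have mD: "Da \<in> SM ?U {Rs s}"
      unfolding Da_def[abs_def]
      by (intro SM.const SM.mult SM.add SM.exp SM_sum cR coord_SM) auto
    have mDi: "(\<lambda>u. inverse (Da u)) \<in> SM ?U {Rs s}"
      using Dpos by (intro SM.inv mD) (auto simp: less_imp_neq[symmetric])
    have mPA: "PA \<in> SM ?U {Rs s}"
      unfolding PA_def[abs_def]
      by (intro SM.const SM.mult SM.add SM.exp SM_sum cR coord_SM mDi) auto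
    have mPR: "PR \<in> SM ?U {Rs s}"
      unfolding PR_def[abs_def]
      by (intro SM.const SM.mult SM.add SM.exp SM_sum cR coord_SM mDi) auto
    have mPRi: "(\<lambda>u. inverse (PR u)) \<in> SM ?U {Rs s}"
      using Psirpos by (intro SM.inv mPR) (auto simp: PR_eq less_imp_neq[symmetric])
    have mg: "(\<lambda>u. (-1) * PA u * inverse (PR u)) \<in> SM ?U {Rs s}"
      by (intro SM.const SM.mult mPA mPRi)
    show "\<exists>g\<in>SM ?U {Rs s}. \<forall>x\<in>?U. g x = frechet_derivative (Rs s) (at x) v"
    proof (rule exI_SM[OF mg], intro ballI)
      fix x :: "real^'n" assume x: "x \<in> ?U"
      have "frechet_derivative (Rs s) (at x) v = - Psia x (Rs s x) v / Psir x (Rs s x)"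
        using frech_eq[OF d[OF x]] by simp
      then show "(-1) * PA x * inverse (PR x) = frechet_derivative (Rs s) (at x) v"
        by (simp add: PA_eq PR_eq divide_inverse)
    qed
  qed
qed



definition Lg :: "real^'n \<Rightarrow> real^'n" where "Lg z = (\<chi> i. ln (z $ i))"

lemma f_eq:
  fixes z :: "real^'n"
  assumes z: "\<forall>i. 0 < z $ i"
  shows "(1 + (\<Sum>i\<in>UNIV. z $ i)) ^ (CARD('n) + 1) / (\<Prod>i\<in>UNIV. z $ i) = exp (Psi (Lg z) 1)"
proof -
  have pos: "0 < 1 + (\<Sum>i\<in>UNIV. z $ i)" using z by (simp add: add_pos_nonneg sum_nonneg less_imp_le)
  have e1: "(\<Sum>i\<in>UNIV. exp (1 * Lg z $ i)) = (\<Sum>i\<in>UNIV. z $ i)"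
    using z by (simp add: Lg_def)
  have e2: "exp (\<Sum>i\<in>UNIV. Lg z $ i) = (\<Prod>i\<in>UNIV. z $ i)"
    using z by (simp add: Lg_def exp_sum)
  have e3: "exp ((real CARD('n) + 1) * ln (1 + (\<Sum>i\<in>UNIV. z $ i))) = (1 + (\<Sum>i\<in>UNIV. z $ i)) ^ (CARD('n) + 1)"
  proof -
    have "(real CARD('n) + 1) * ln (1 + (\<Sum>i\<in>UNIV. z $ i)) = ln ((1 + (\<Sum>i\<in>UNIV. z $ i)) ^ (CARD('n) + 1))"
      using ln_realpow[of "1 + (\<Sum>i\<in>UNIV. z $ i)" "CARD('n) + 1"] by simp
    then show ?thesis using pos by simp
  qed
  show ?thesis
    unfolding Psi_def e1 by (simp add: exp_diff e2 e3)
qed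

lemma Psi_zero_vec: "Psi (0::real^'n) r = (real CARD('n) + 1) * ln (1 + real CARD('n))"
  unfolding Psi_def by simp

lemma Psi_ge:
  fixes x :: "real^'n"
  shows "(real CARD('n) + 1) * ln (1 + real CARD('n)) \<le> Psi x 1"
    and "x \<noteq> 0 \<Longrightarrow> (real CARD('n) + 1) * ln (1 + real CARD('n)) < Psi x 1"
proof -
  show "x \<noteq> 0 \<Longrightarrow> (real CARD('n) + 1) * ln (1 + real CARD('n)) < Psi x 1"
    using Psi_mono[of x 0 1] Psi_0[of x] by simp
  then show "(real CARD('n) + 1) * ln (1 + real CARD('n)) \<le> Psi x 1"
  proof (cases "x = 0")
    case True
    have "Psi (0::real^'n) 1 = (real CARD('n) + 1) * ln (1 + real CARD('n))" by (rule Psi_zero_vec)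
    then show ?thesis using True by simp
  qed (use \<open>x \<noteq> 0 \<Longrightarrow> _\<close> in auto)
qed

lemma bound_eq: "exp ((real CARD('n) + 1) * ln (1 + real CARD('n))) = real (CARD('n) + 1) ^ (CARD('n) + 1)"
proof -
  have "(real CARD('n) + 1) * ln (1 + real CARD('n)) = ln ((1 + real CARD('n)) ^ (CARD('n) + 1))"
    using ln_realpow[of "1 + real CARD('n)" "CARD('n) + 1"] by simp
  then show ?thesis by (simp add: add.commute)
qed

lemma norm_cart: "norm (x::real^'n) = sqrt (\<Sum>i\<in>UNIV. x $ i * x $ i)"
  by (simp add: norm_vec_def L2_set_def power2_eq_square)



lemma open_pos_coord: "open {z::real^'n. 0 < z $ i}"
  by (rule open_Collect_less) (auto intro: continuous_on_const linear_continuous_on[OF bounded_linear_vec_nth])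

lemma Lg_pos_open: "open {z::real^'n. (\<forall>i. 0 < z $ i) \<and> z \<noteq> 1}"
proof -
  have e: "{z::real^'n. (\<forall>i. 0 < z $ i) \<and> z \<noteq> 1} = (\<Inter>i\<in>UNIV. {z. 0 < z $ i}) \<inter> {z. z \<noteq> 1}" by auto
  have o1: "open (\<Inter>i\<in>UNIV. {z::real^'n. 0 < z $ i})"
    by (rule open_INT) (simp_all add: open_pos_coord)
  have o2: "open {z::real^'n. z \<noteq> 1}"
    by (rule open_Collect_neq) (auto intro: continuous_on_const continuous_on_id)
  show ?thesis unfolding e by (rule open_Int[OF o1 o2])
qed

theorem mainTheorem11:
  fixes t :: real
  defines "f \<equiv> (\<lambda>z::real^'n. (1 + (\<Sum>i\<in>UNIV. z $ i)) ^ (CARD('n) + 1) / (\<Prod>i\<in>UNIV. z $ i))"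
  defines "P \<equiv> {z::real^'n. (\<forall>i. 0 < z $ i) \<and> f z = t}"
  shows "(t < real (CARD('n) + 1) ^ (CARD('n) + 1) \<longrightarrow> P = {})
       \<and> (t = real (CARD('n) + 1) ^ (CARD('n) + 1) \<longrightarrow> (\<exists>p. P = {p}))
       \<and> (t > real (CARD('n) + 1) ^ (CARD('n) + 1) \<longrightarrow> diffeomorphic P (sphere (0::real^'n) 1))"
proof -
  define m0 where "m0 = (real CARD('n) + 1) * ln (1 + real CARD('n))"
  have B: "exp m0 = real (CARD('n) + 1) ^ (CARD('n) + 1)" unfolding m0_def by (rule bound_eq)
  have fz: "f z = exp (Psi (Lg z) 1)" if "\<forall>i. 0 < z $ i" for z
    unfolding f_def using f_eq[OF that] by simp
  have Pchar: "z \<in> P \<longleftrightarrow> (\<forall>i. 0 < z $ i) \<and> exp (Psi (Lg z) 1) = t" for z :: "real^'n"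
    unfolding P_def using fz by auto
  have ge: "m0 \<le> Psi (Lg z) 1" for z :: "real^'n" unfolding m0_def by (rule Psi_ge(1))
  have gt: "Lg z \<noteq> 0 \<Longrightarrow> m0 < Psi (Lg z) 1" for z :: "real^'n" unfolding m0_def by (rule Psi_ge(2))
  have Lg0: "Lg z = 0 \<Longrightarrow> \<forall>i. 0 < z $ i \<Longrightarrow> z = 1" for z :: "real^'n"
  proof -
    assume "Lg z = 0" "\<forall>i. 0 < z $ i"
    then have "Lg z $ i = 0" for i by simp
    then have "ln (z $ i) = 0" for i by (simp add: Lg_def)
    then have "z $ i = 1" for i using \<open>\<forall>i. 0 < z $ i\<close> ln_eq_zero_iff[of "z $ i"] by simp
    then show "z = 1" by (simp add: vec_eq_iff one_vec_def)
  qed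
  show ?thesis
  proof (intro conjI impI)
    assume t: "t < real (CARD('n) + 1) ^ (CARD('n) + 1)"
    show "P = {}"
    proof (rule ccontr)
      assume "P \<noteq> {}"
      then obtain z where "z \<in> P" by blast
      then have "exp (Psi (Lg z) 1) = t" using Pchar by blast
      moreover have "exp m0 \<le> exp (Psi (Lg z) 1)" using ge by simp
      ultimately show False using t B by simp
    qed
  next
    assume t: "t = real (CARD('n) + 1) ^ (CARD('n) + 1)"
    have "P = {1}"
    proof
      show "P \<subseteq> {1}"
      proof
        fix z assume z: "z \<in> P"
        then have zp: "\<forall>i. 0 < z $ i" and "exp (Psi (Lg z) 1) = exp m0" using Pchar t B by auto
        then have "Psi (Lg z) 1 = m0" by simp
        then have "Lg z = 0" using gt by force
        then show "z \<in> {1}" using Lg0 zp by simp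
      qed
      have "(\<forall>i. 0 < (1::real^'n) $ i)" by (simp add: one_vec_def)
      moreover have "f 1 = t"
      proof -
        have s1: "(\<Sum>i\<in>UNIV. (1::real^'n) $ i) = real CARD('n)" by (simp add: one_vec_def)
        have p1: "(\<Prod>i\<in>UNIV. (1::real^'n) $ i) = 1" by (simp add: one_vec_def)
        have e: "(1 + real CARD('n)) ^ (CARD('n) + 1) / 1 = real (CARD('n) + 1) ^ (CARD('n) + 1)"
          by (simp add: add.commute)
        show ?thesis unfolding f_def s1 p1 t by (rule e)
      qed
      ultimately show "{1} \<subseteq> P" unfolding P_def by simp
    qed
    then show "\<exists>p. P = {p}" by blast
  next
    assume t: "real (CARD('n) + 1) ^ (CARD('n) + 1) < t"
    define s where "s = ln t"
    have et: "exp m0 < t" using t B by simp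
    have tpos: "0 < t" using et exp_gt_zero[of m0] by linarith
    have "ln (exp m0) < ln t" using et tpos by (subst ln_less_cancel_iff) auto
    then have ms: "m0 < s" unfolding s_def by simp
    have ex: "exp x = t \<longleftrightarrow> x = s" for x
    proof
      assume "exp x = t" then show "x = s" unfolding s_def by (metis ln_exp)
    next
      assume "x = s" then show "exp x = t" unfolding s_def using tpos by simp
    qed
    have Pchar2: "z \<in> P \<longleftrightarrow> (\<forall>i. 0 < z $ i) \<and> Psi (Lg z) 1 = s" for z :: "real^'n"
      unfolding Pchar ex ..
    have Psi0s: "Psi u 0 < s" for u :: "real^'n" using ms Psi_0[of u] unfolding m0_def by simp
    define h where "h z = (1 / norm (Lg z)) *\<^sub>R Lg z" for z :: "real^'n"
    define g where "g u = (\<chi> i. exp (Rs s u * u $ i))" for u :: "real^'n"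
    have Lnz: "Lg z \<noteq> 0" if "z \<in> P" for z :: "real^'n"
    proof
      assume "Lg z = 0"
      then have "Psi (Lg z) 1 = m0" unfolding m0_def by (simp add: Psi_zero_vec)
      then show False using that Pchar2 ms by simp
    qed
    have hS: "h z \<in> sphere 0 1" if "z \<in> P" for z :: "real^'n"
      using Lnz[OF that] unfolding h_def by simp
    have Lg_g: "Lg (g u) = Rs s u *\<^sub>R u" for u :: "real^'n"
      unfolding Lg_def g_def by (simp add: vec_eq_iff)
    have gP: "g u \<in> P" if "u \<in> sphere 0 1" for u :: "real^'n"
    proof -
      have u: "u \<noteq> 0" using that by auto
      have "Psi (Lg (g u)) 1 = s" unfolding Lg_g Psi_scale using Rs[OF u Psi0s] by simp
      moreover have "\<forall>i. 0 < g u $ i" unfolding g_def by simp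
      ultimately show ?thesis using Pchar2 by simp
    qed
    have ghz: "g (h z) = z" if z: "z \<in> P" for z :: "real^'n"
    proof -
      define n where "n = norm (Lg z)"
      have n: "0 < n" unfolding n_def using Lnz[OF z] by simp
      have hz0: "h z \<noteq> 0" using hS[OF z] by auto
      have nh: "n *\<^sub>R h z = Lg z" unfolding h_def n_def[symmetric] using n by simp
      have "Psi (h z) n = s" using Psi_scale[of n "h z"] nh z Pchar2 by simp
      then have R: "Rs s (h z) = n" using Rs_unique[OF hz0 n] by simp
      have zp: "\<forall>i. 0 < z $ i" using z Pchar2 by simp
      have gi: "g (h z) $ i = z $ i" for i
      proof -
        have e: "n * h z $ i = Lg z $ i" using nh vector_scaleR_component[of n "h z" i] by simp
        have "g (h z) $ i = exp (Rs s (h z) * h z $ i)" unfolding g_def by simp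
        also have "\<dots> = exp (Lg z $ i)" unfolding R e ..
        also have "\<dots> = z $ i" using zp unfolding Lg_def by simp
        finally show ?thesis .
      qed
      then show ?thesis by (simp add: vec_eq_iff)
    qed
    have hgu: "h (g u) = u" if u: "u \<in> sphere 0 1" for u :: "real^'n"
    proof -
      have u0: "u \<noteq> 0" using u by auto
      have R: "0 < Rs s u" using Rs[OF u0 Psi0s] by simp
      have "norm (Lg (g u)) = Rs s u" unfolding Lg_g using R u by simp
      then show ?thesis unfolding h_def Lg_g using R by simp
    qed
    define O1 where "O1 = {z::real^'n. (\<forall>i. 0 < z $ i) \<and> z \<noteq> 1}"
    define H where "H z = (\<chi> i. ln (z $ i) * inverse (sqrt (\<Sum>j\<in>UNIV. ln (z $ j) * ln (z $ j))))" for z :: "real^'n"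
    have HO: "O1 \<subseteq> {z. 0 < (\<Sum>j\<in>UNIV. ln (z $ j) * ln (z $ j))}"
    proof
      fix z assume z: "z \<in> O1"
      then obtain k where k: "z $ k \<noteq> 1" unfolding O1_def by (auto simp: vec_eq_iff one_vec_def)
      have "ln (z $ k) \<noteq> 0" using k z unfolding O1_def by simp
      then have "0 < ln (z $ k) * ln (z $ k)" by (auto simp: zero_less_mult_iff)
      moreover have "ln (z $ k) * ln (z $ k) \<le> (\<Sum>j\<in>UNIV. ln (z $ j) * ln (z $ j))"
        by (rule member_le_sum) auto
      ultimately show "z \<in> {z. 0 < (\<Sum>j\<in>UNIV. ln (z $ j) * ln (z $ j))}" by simp
    qed
    have Hsm: "smooth_on_open O1 H"
    proof (rule SM_vec_smooth[where A = "{}"])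
      show "open O1" unfolding O1_def by (rule Lg_pos_open)
      fix i
      have mS: "(\<lambda>z. \<Sum>j\<in>UNIV. ln (z $ j) * ln (z $ j)) \<in> SM O1 {}"
        by (intro SM_sum SM.mult SM.ln coord_SM) (auto simp: O1_def)
      have mq: "(\<lambda>z. sqrt (\<Sum>j\<in>UNIV. ln (z $ j) * ln (z $ j))) \<in> SM O1 {}"
        using HO by (intro SM.sqrt mS) auto
      have mqi: "(\<lambda>z. inverse (sqrt (\<Sum>j\<in>UNIV. ln (z $ j) * ln (z $ j)))) \<in> SM O1 {}"
        using HO by (intro SM.inv mq) auto
      show "(\<lambda>x. H x $ i) \<in> SM O1 {}"
        unfolding H_def by (simp, intro SM.mult SM.ln coord_SM mqi) (auto simp: O1_def)
    qed auto
    have Hh: "H z = h z" for z :: "real^'n"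
      unfolding H_def h_def by (simp add: vec_eq_iff Lg_def norm_cart divide_inverse mult.commute)
    have hsm: "smooth_map_on P h"
      unfolding smooth_map_on_def
    proof
      fix x assume x: "x \<in> P"
      have x1: "x \<noteq> 1"
      proof
        assume "x = 1"
        then have "Lg x = 0" unfolding Lg_def by (simp add: vec_eq_iff one_vec_def)
        then show False using Lnz[OF x] by simp
      qed
      have xO: "x \<in> O1" unfolding O1_def using x Pchar2 x1 by auto
      show "\<exists>U F. x \<in> U \<and> smooth_on_open U F \<and> (\<forall>y\<in>P \<inter> U. F y = h y)"
        by (rule exI[of _ O1], rule exI[of _ H]) (simp add: xO Hsm Hh)
    qed
    have gsm0: "smooth_on_open {u::real^'n. u \<noteq> 0} g"
    proof (rule SM_vec_smooth[where A = "{Rs s}"])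
      show "open {u::real^'n. u \<noteq> 0}" by (rule open_nonzero)
      show "\<And>a. a \<in> {Rs s} \<Longrightarrow> (\<forall>x\<in>{u::real^'n. u \<noteq> 0}. a differentiable at x) \<and>
          (\<forall>v. \<exists>g\<in>SM {u. u \<noteq> 0} {Rs s}. \<forall>x\<in>{u. u \<noteq> 0}. g x = frechet_derivative a (at x) v)"
        using R_atom[OF ms[unfolded m0_def]] by simp
      fix i
      have cR: "Rs s \<in> SM {u::real^'n. u \<noteq> 0} {Rs s}" by (rule SM.atom) simp
      show "(\<lambda>x. g x $ i) \<in> SM {u::real^'n. u \<noteq> 0} {Rs s}"
        unfolding g_def by (simp, intro SM.exp SM.mult cR coord_SM)
    qed
    have gsm: "smooth_map_on (sphere 0 1) g"
      unfolding smooth_map_on_def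
    proof
      fix x :: "real^'n" assume "x \<in> sphere 0 1"
      then have xU: "x \<noteq> 0" by auto
      show "\<exists>U F. x \<in> U \<and> smooth_on_open U F \<and> (\<forall>y\<in>sphere 0 1 \<inter> U. F y = g y)"
        by (rule exI[of _ "{u::real^'n. u \<noteq> 0}"], rule exI[of _ g]) (use xU gsm0 in simp)
    qed
    show "diffeomorphic P (sphere (0::real^'n) 1)"
      unfolding diffeomorphic_def
      by (rule exI[of _ h], rule exI[of _ g]) (intro conjI ballI hS gP ghz hgu hsm gsm; assumption)
  qed
qed


end
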